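(* Let $G$ be a very well-covered graph with $V(G)=\{x_1,\ldots,x_h,y_1,\ldots,y_h\}$ such that $\{x_1,\ldots,x_h\}$ is a minimal vertex cover, $\{y_1,\ldots,y_h\}$ a maximal independent set and $\{x_i,y_i\}\in E(G)$ for all $i$. Let $s\ge1$, $e_1,\ldots,e_s\in E(G)$, and let $G'$ be the graph associated to $(I(G)^{s+1}:e_1\cdots e_s)$ as in the context. Let $u\in V(G)$ with $u^2\in(I(G)^{s+1}:e_1\cdots e_s)$. If $a\in N_{G'}([u]\setminus u)\cap V(G)$ and $b\in N_G[[u]]$, then $\{a,b\}\in E(G')$.
   Context: For $u\in\{x_i,y_i\}$, $[u]=\{x_i,y_i\}$, $[u]\setminus u$ denotes the other element of $[u]$, and $N_G[[u]]=N_G[x_i,y_i]$ is the closed neighbourhood $\{x_i,y_i\}\cup\{v\mid v$ adjacent in $G$ to $x_i$ or $y_i\}$; $N_{G'}(w)$ is the open neighbourhood of $w$ in $G'$. $I(G)$ is the edge ideal; edges are identified with the products of their endpoints. $G$ is very well-covered if it has no isolated vertices, all minimal vertex covers have the same size, and this size is $|V(G)|/2$. Even-connection: a sequence $p_0p_1\cdots p_{2k+1}$, $k\ge1$, with $\{p_r,p_{r+1}\}\in E(G)$ for all $r$, each $\{p_{2\ell+1},p_{2\ell+2}\}$ ($0\le\ell\le k-1$) equal to some $e_m$, each edge used among these at most as many times as it appears in $e_1,\dots,e_s$; then $p_0,p_{2k+1}$ (possibly equal) are even-connected. $(I(G)^{s+1}:e_1\cdots e_s)$ is minimally generated by $uv$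 with $\{u,v\}\in E(G)$ or $u,v$ even-connected; $G'$ is the graph whose edge ideal is the polarization of this ideal (each generator $u^2$ replaced by $uu^*$ with a new vertex $u^*$), so for $u\ne v\in V(G)$, $\{u,v\}\in E(G')$ iff $\{u,v\}\in E(G)$ or $u,v$ are even-connected. *)

theory Defs
  imports Main "HOL-Library.Multiset"
begin

definition simple_graph :: "'a set \<Rightarrow> ('a \<Rightarrow> 'a \<Rightarrow> bool) \<Rightarrow> bool" where
  "simple_graph V E \<longleftrightarrow> finite V \<and>
     (\<forall>a b. E a b \<longrightarrow> a \<in> V \<and> b \<in> V \<and> a \<noteq> b \<and> E b a)"

definition vertex_cover :: "'a set \<Rightarrow> ('a \<Rightarrow> 'a \<Rightarrow> bool) \<Rightarrow> 'a set \<Rightarrow> bool" where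
  "vertex_cover V E C \<longleftrightarrow> C \<subseteq> V \<and> (\<forall>a\<in>V. \<forall>b\<in>V. E a b \<longrightarrow> a \<in> C \<or> b \<in> C)"

definition minimal_vertex_cover :: "'a set \<Rightarrow> ('a \<Rightarrow> 'a \<Rightarrow> bool) \<Rightarrow> 'a set \<Rightarrow> bool" where
  "minimal_vertex_cover V E C \<longleftrightarrow> vertex_cover V E C \<and> (\<forall>D. D \<subset> C \<longrightarrow> \<not> vertex_cover V E D)"

definition independent_set :: "'a set \<Rightarrow> ('a \<Rightarrow> 'a \<Rightarrow> bool) \<Rightarrow> 'a set \<Rightarrow> bool" where
  "independent_set V E S \<longleftrightarrow> S \<subseteq> V \<and> (\<forall>a\<in>S. \<forall>b\<in>S. \<not> E a b)"

definition maximal_independent_set :: "'a set \<Rightarrow> ('a \<Rightarrow> 'a \<Rightarrow> bool) \<Rightarrow> 'a set \<Rightarrow> bool" where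
  "maximal_independent_set V E S \<longleftrightarrow> independent_set V E S \<and>
     (\<forall>T. independent_set V E T \<and> S \<subseteq> T \<longrightarrow> T = S)"

definition very_well_covered :: "'a set \<Rightarrow> ('a \<Rightarrow> 'a \<Rightarrow> bool) \<Rightarrow> bool" where
  "very_well_covered V E \<longleftrightarrow> (\<forall>v\<in>V. \<exists>w\<in>V. E v w) \<and>
     (\<forall>C. minimal_vertex_cover V E C \<longrightarrow> 2 * card C = card V)"

(* Monomials in k[V] are multisets of variables; the edge {p,q} is the monomial pq.
   A monomial m lies in (I(G)^(s+1) : e_1...e_s) (s = length es) iff m*e_1*...*e_s lies in
   the monomial ideal I(G)^(s+1), i.e. iff it is divisible by a product of s+1 edges. *)
definition edge_prod :: "('a \<times> 'a) list \<Rightarrow> 'a multiset" where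
  "edge_prod es = (\<Sum>(p,q)\<leftarrow>es. {#p, q#})"

definition in_power_colon :: "('a \<Rightarrow> 'a \<Rightarrow> bool) \<Rightarrow> ('a \<times> 'a) list \<Rightarrow> 'a multiset \<Rightarrow> bool" where
  "in_power_colon E es m \<longleftrightarrow>
     (\<exists>fs. length fs = Suc (length es) \<and> (\<forall>(p,q)\<in>set fs. E p q) \<and>
           edge_prod fs \<subseteq># m + edge_prod es)"

end

theory Submission
  imports Defs
begin

inductive wk :: "('a \<Rightarrow> 'a \<Rightarrow> bool) \<Rightarrow> 'a multiset multiset \<Rightarrow> 'a \<Rightarrow> 'a \<Rightarrow> bool" for E where
  wk_base: "E p q \<Longrightarrow> wk E {#} p q"
| wk_step: "E p c \<Longrightarrow> E c d \<Longrightarrow> wk E U d q \<Longrightarrow> wk E (add_mset {#c,d#} U) p q"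

inductive pre :: "('a \<Rightarrow> 'a \<Rightarrow> bool) \<Rightarrow> 'a multiset multiset \<Rightarrow> 'a \<Rightarrow> 'a \<Rightarrow> bool" for E where
  pre_nil: "pre E {#} a a"
| pre_snoc: "pre E A a t \<Longrightarrow> E t c \<Longrightarrow> E c d \<Longrightarrow> pre E (add_mset {#c,d#} A) a d"

lemma pre_wk: "pre E A a t \<Longrightarrow> wk E X t q \<Longrightarrow> wk E (A + X) a q"
proof (induction arbitrary: X q rule: pre.induct)
  case (pre_nil a)
  then show ?case by simp
next
  case (pre_snoc A a t c d)
  have "wk E (add_mset {#c,d#} X) t q" using pre_snoc.hyps(2,3) pre_snoc.prems by (rule wk.wk_step[of E])
  then have "wk E (A + add_mset {#c,d#} X) a q" using pre_snoc.IH by blast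
  then show ?case by simp
qed

lemma wk_append: "wk E U q d \<Longrightarrow> E d c \<Longrightarrow> E c p \<Longrightarrow> wk E (add_mset {#c,d#} U) q p"
proof (induction arbitrary: c p rule: wk.induct)
  case (wk_base p' q')
  have "wk E {#} c p" using wk_base(3) by (rule wk.wk_base[of E])
  then have "wk E (add_mset {#q',c#} {#}) p' p" using wk_base(1,2) by (meson wk.wk_step)
  then show ?case by (simp add: add_mset_commute)
next
  case (wk_step p' c' d' U q')
  have "wk E (add_mset {#c,q'#} U) d' p" using wk_step.IH wk_step.prems by blast
  then have "wk E (add_mset {#c',d'#} (add_mset {#c,q'#} U)) p' p"
    by (rule wk.wk_step[of E, OF wk_step.hyps(1,2)])
  then show ?case by (simp add: add_mset_commute)
qed

lemma wk_rev: "wk E U p q \<Longrightarrow> (\<And>a b. E a b \<Longrightarrow> E b a) \<Longrightarrow> wk E U q p"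
proof (induction rule: wk.induct)
  case (wk_base p q)
  have "E q p" using wk_base.hyps by (rule wk_base.prems)
  then show ?case by (rule wk.wk_base[of E])
next
  case (wk_step p c d U q)
  have "wk E U q d" using wk_step.IH[OF wk_step.prems] .
  moreover have "E d c" using wk_step.hyps(2) by (rule wk_step.prems)
  moreover have "E c p" using wk_step.hyps(1) by (rule wk_step.prems)
  ultimately show ?case by (rule wk_append)
qed

lemma wk_last: "wk E X a q \<Longrightarrow> \<exists>z. E z q \<and> (\<forall>b. E z b \<longrightarrow> wk E X a b)"
proof (induction rule: wk.induct)
  case (wk_base p q)
  have "\<forall>b. E p b \<longrightarrow> wk E {#} p b" using wk.wk_base[of E] by blast
  then show ?case using wk_base by blast
next
  case (wk_step p c d U q)
  then obtain z where z: "E z q" "\<forall>b. E z b \<longrightarrow> wk E U d b" by blast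
  have "\<forall>b. E z b \<longrightarrow> wk E (add_mset {#c,d#} U) p b"
  proof (intro allI impI)
    fix b assume "E z b"
    then have "wk E U d b" using z(2) by blast
    then show "wk E (add_mset {#c,d#} U) p b" by (rule wk.wk_step[of E, OF wk_step.hyps(1,2)])
  qed
  then show ?case using z(1) by blast
qed

definition hw :: "('a \<Rightarrow> 'a \<Rightarrow> bool) \<Rightarrow> 'a multiset multiset \<Rightarrow> 'a \<Rightarrow> 'a \<Rightarrow> bool" where
  "hw E U c q \<longleftrightarrow> (\<exists>d U'. U = add_mset {#c,d#} U' \<and> E c d \<and> wk E U' d q)"

lemma wk_closed: "wk E U p q \<Longrightarrow> (\<And>a b. E a b \<Longrightarrow> E b a) \<Longrightarrow> e \<in># U \<Longrightarrow> c \<in># e \<Longrightarrow>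
   \<exists>U'. U' \<subseteq># U \<and> (hw E U' c q \<or> hw E U' c p)"
proof (induction arbitrary: e c rule: wk.induct)
  case (wk_base p q)
  show ?case using wk_base.prems(2) by simp
next
  case (wk_step p c0 d0 U q)
  show ?case
  proof (cases "e = {#c0,d0#}")
    case True
    then have "c = c0 \<or> c = d0" using wk_step.prems(3) by auto
    then show ?thesis
    proof
      assume "c = c0"
      then have "hw E (add_mset {#c0,d0#} U) c q" using wk_step.hyps(2,3) unfolding hw_def by blast
      then show ?thesis by blast
    next
      assume "c = d0"
      have "wk E {#} c0 p" using wk_step.hyps(1) wk_step.prems(1) by (simp add: wk.wk_base)
      moreover have "E d0 c0" using wk_step.hyps(2) wk_step.prems(1) by blast
      ultimately have "hw E {#{#d0,c0#}#} c p" using \<open>c = d0\<close> unfolding hw_def by blast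
      moreover have "{#{#d0,c0#}#} \<subseteq># add_mset {#c0,d0#} U" by (simp add: add_mset_commute)
      ultimately show ?thesis by blast
    qed
  next
    case False
    then have "e \<in># U" using wk_step.prems(2) by simp
    then obtain U' where U': "U' \<subseteq># U" "hw E U' c q \<or> hw E U' c d0"
      using wk_step.IH[OF wk_step.prems(1) _ wk_step.prems(3)] by blast
    from U'(2) show ?thesis
    proof
      assume "hw E U' c q"
      moreover have "U \<subseteq># add_mset {#c0,d0#} U" by simp
      ultimately show ?thesis using U'(1) by (meson subset_mset.order_trans)
    next
      assume "hw E U' c d0"
      then obtain d U'' where h: "U' = add_mset {#c,d#} U''" "E c d" "wk E U'' d d0"
        unfolding hw_def by blast
      have "wk E (add_mset {#c0,d0#} U'') d p"
        using wk_append[OF h(3)] wk_step.hyps(1,2) wk_step.prems(1) by blast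
      moreover have "add_mset {#c0,d0#} U' = add_mset {#c,d#} (add_mset {#c0,d0#} U'')"
        using h(1) by (simp add: add_mset_commute)
      ultimately have "hw E (add_mset {#c0,d0#} U') c p" using h(2) unfolding hw_def
        by blast
      moreover have "add_mset {#c0,d0#} U' \<subseteq># add_mset {#c0,d0#} U" using U'(1) by simp
      ultimately show ?thesis by blast
    qed
  qed
qed

lemma disj_sub: "\<forall>e. e \<in># A \<longrightarrow> e \<notin># U \<Longrightarrow> A \<subseteq># B \<Longrightarrow> U \<subseteq># B \<Longrightarrow> A + U \<subseteq># B"
  unfolding subseteq_mset_def
  by (metis add.commute add.right_neutral count_union not_in_iff)

lemma shortcut:
  assumes "wk E R t w" "pre E A a t" "A + R \<subseteq># B" "\<forall>e. e \<in># A \<longrightarrow> e \<notin># U"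
    and UB: "U \<subseteq># B"
    and CL: "\<forall>e\<in>#U. \<forall>c\<in>#e. \<exists>U'. U' \<subseteq># U \<and> hw E U' c u"
    and HB: "\<forall>t. E t w \<longrightarrow> wk E U t u"
  shows "\<exists>X. X \<subseteq># B \<and> wk E X a u"
  using assms(1-4) HB
proof (induction arbitrary: A rule: wk.induct)
  case (wk_base t w)
  have "wk E U t u" using wk_base.prems(4) wk_base.hyps by blast
  then have "wk E (A + U) a u" using pre_wk[OF wk_base.prems(1)] by blast
  moreover have "A + U \<subseteq># B" using disj_sub[OF wk_base.prems(3) _ UB] wk_base.prems(2) by simp
  ultimately show ?case by blast
next
  case (wk_step t c d R w)
  show ?case
  proof (cases "{#c,d#} \<in># U")
    case True
    then obtain U' where U': "U' \<subseteq># U" "hw E U' c u" using CL by force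
    then obtain d' U'' where h: "U' = add_mset {#c,d'#} U''" "E c d'" "wk E U'' d' u"
      unfolding hw_def by blast
    have "wk E U' t u" unfolding h(1) by (rule wk.wk_step[of E, OF wk_step.hyps(1) h(2,3)])
    then have "wk E (A + U') a u" using pre_wk[OF wk_step.prems(1)] by blast
    moreover have "A \<subseteq># B" using wk_step.prems(2)
      by (meson mset_subset_eq_add_left subset_mset.order_trans)
    moreover have "U' \<subseteq># B" using U'(1) UB by (meson subset_mset.order_trans)
    moreover have "\<forall>e. e \<in># A \<longrightarrow> e \<notin># U'" using wk_step.prems(3) U'(1)
      by (meson mset_subset_eqD)
    ultimately show ?thesis using disj_sub by blast
  next
    case False
    have "pre E (add_mset {#c,d#} A) a d"
      by (rule pre_snoc[of E, OF wk_step.prems(1) wk_step.hyps(1,2)])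
    moreover have "add_mset {#c,d#} A + R \<subseteq># B" using wk_step.prems(2) by simp
    moreover have "\<forall>e. e \<in># add_mset {#c,d#} A \<longrightarrow> e \<notin># U" using wk_step.prems(3) False by auto
    ultimately show ?thesis using wk_step.IH wk_step.prems(4) by blast
  qed
qed

definition eb :: "('a \<times> 'a) list \<Rightarrow> 'a multiset multiset" where
  "eb l = image_mset (\<lambda>(p,q). {#p,q#}) (mset l)"

lemma edge_prod_eq: "edge_prod l = \<Sum>\<^sub># (eb l)"
  unfolding edge_prod_def eb_def by (induction l) auto

lemma edge_prod_Cons: "edge_prod ((p,q)#l) = {#p,q#} + edge_prod l"
  unfolding edge_prod_def by simp

lemma wk_sum: "wk E U p q \<Longrightarrow> \<exists>fs. length fs = Suc (size U) \<and> (\<forall>(p,q)\<in>set fs. E p q) \<and>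
   edge_prod fs = {#p,q#} + \<Sum>\<^sub># U"
proof (induction rule: wk.induct)
  case (wk_base p q)
  then show ?case by (intro exI[of _ "[(p,q)]"]) (simp add: edge_prod_def)
next
  case (wk_step p c d U q)
  then obtain fs where fs: "length fs = Suc (size U)" "\<forall>(p,q)\<in>set fs. E p q"
    "edge_prod fs = {#d,q#} + \<Sum>\<^sub># U" by blast
  have "edge_prod ((p,c)#fs) = {#p,q#} + \<Sum>\<^sub># (add_mset {#c,d#} U)"
    unfolding edge_prod_Cons fs(3) by (simp add: add_mset_commute)
  moreover have "length ((p,c)#fs) = Suc (size (add_mset {#c,d#} U))" using fs(1) by simp
  moreover have "\<forall>(a,b)\<in>set ((p,c)#fs). E a b" using fs(2) wk_step.hyps(1) by auto
  ultimately show ?case by blast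
qed

lemma sub_image: "U \<subseteq># image_mset f N \<Longrightarrow> \<exists>M. M \<subseteq># N \<and> image_mset f M = U"
proof (induction U arbitrary: N)
  case empty
  show ?case by (intro exI[of _ "{#}"]) simp
next
  case (add x U)
  have xi: "x \<in># image_mset f N" and U1: "U \<subseteq># image_mset f N - {#x#}"
    using add.prems unfolding insert_subset_eq_iff by blast+
  from xi obtain y where y: "y \<in># N" "f y = x" by auto
  have "image_mset f (N - {#y#}) = image_mset f N - {#x#}"
    using image_mset_Diff[of "{#y#}" N f] y by simp
  then have "U \<subseteq># image_mset f (N - {#y#})" using U1 by simp
  then obtain M where M: "M \<subseteq># N - {#y#}" "image_mset f M = U" using add.IH by blast
  have "add_mset y M \<subseteq># N" using M(1) y(1) unfolding insert_subset_eq_iff by simp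
  moreover have "image_mset f (add_mset y M) = add_mset x U" using M(2) y(2) by simp
  ultimately show ?case by blast
qed

lemma sound:
  assumes "wk E U p q" "U \<subseteq># eb es" "\<forall>(a,b)\<in>set es. E a b"
  shows "in_power_colon E es {#p,q#}"
proof -
  obtain fs where fs: "length fs = Suc (size U)" "\<forall>(p,q)\<in>set fs. E p q"
    "edge_prod fs = {#p,q#} + \<Sum>\<^sub># U" using wk_sum[OF assms(1)] by blast
  obtain M where M: "M \<subseteq># mset es" "image_mset (\<lambda>(p,q). {#p,q#}) M = U"
    using sub_image[of U _ "mset es"] assms(2) unfolding eb_def by blast
  obtain rs where rs: "mset rs = mset es - M" using ex_mset by blast
  have sz: "size M = size U" using M(2) by auto
  have "size M \<le> length es" using M(1) by (metis size_mset size_mset_mono)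
  then have "length rs = length es - size U" using rs sz M(1)
    by (metis size_Diff_submset size_mset)
  then have len: "length (fs @ rs) = Suc (length es)" using fs(1) \<open>size M \<le> length es\<close> sz by simp
  have ebr: "eb rs = eb es - U" unfolding eb_def rs using M image_mset_Diff by metis
  have ebe: "eb es = U + eb rs" unfolding ebr using assms(2) by simp
  have "edge_prod (fs @ rs) = edge_prod fs + edge_prod rs"
    unfolding edge_prod_eq eb_def by simp
  also have "\<dots> = {#p,q#} + edge_prod es"
    by (simp add: fs(3) edge_prod_eq[of rs] edge_prod_eq[of es] ebe)
  finally have ep: "edge_prod (fs @ rs) = {#p,q#} + edge_prod es" .
  have "set rs \<subseteq> set es" using rs by (metis diff_subset_eq_self set_mset_mono set_mset_mset)
  then have "\<forall>(a,b)\<in>set (fs @ rs). E a b" using fs(2) assms(3) by auto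
  then show ?thesis unfolding in_power_colon_def using len ep by (metis subset_mset.order_refl)
qed

lemma compl:
  "length fs = Suc (size Q) \<Longrightarrow> \<forall>(a,b)\<in>set fs. E a b \<Longrightarrow> \<forall>e\<in>#Q. \<exists>c d. e = {#c,d#} \<and> E c d
   \<Longrightarrow> edge_prod fs = {#p,q#} + \<Sum>\<^sub># Q \<Longrightarrow> \<forall>a b. E a b \<longrightarrow> E b a \<Longrightarrow> \<exists>U. U \<subseteq># Q \<and> wk E U p q"
proof (induction "size Q" arbitrary: Q fs p q rule: less_induct)
  case less
  have "p \<in># edge_prod fs" using less.prems(4) by simp
  then obtain m where m: "m \<in># eb fs" "p \<in># m" unfolding edge_prod_eq by auto
  then obtain p' q' where pq: "(p',q') \<in> set fs" "m = {#p',q'#}" unfolding eb_def by auto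
  have Epq': "E p' q'" using pq(1) less.prems(2) by auto
  obtain c where c: "E p c" "{#p',q'#} = {#p,c#}"
  proof (cases "p = p'")
    case True
    then show ?thesis using that Epq' by blast
  next
    case False
    then have "p = q'" using m(2) pq(2) by auto
    moreover have "E q' p'" using Epq' less.prems(5) by blast
    ultimately show ?thesis using that[of p'] by (simp add: add_mset_commute)
  qed
  define fs' where "fs' = remove1 (p',q') fs"
  have mfs: "mset fs = add_mset (p',q') (mset fs')" using pq(1) by (simp add: fs'_def)
  have ep: "edge_prod fs = {#p,c#} + edge_prod fs'"
    unfolding edge_prod_eq eb_def mfs using c(2) by simp
  have lfs': "length fs' = size Q" using less.prems(1) pq(1) by (simp add: fs'_def length_remove1)
  have efs': "\<forall>(a,b)\<in>set fs'. E a b" using less.prems(2) unfolding fs'_def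
    by (meson notin_set_remove1)
  have eq: "add_mset c (edge_prod fs') = add_mset q (\<Sum>\<^sub># Q)" using ep less.prems(4) by simp
  show ?case
  proof (cases "c = q")
    case True
    then have "wk E {#} p q" using c(1) by (simp add: wk.wk_base)
    moreover have "{#} \<subseteq># Q" by simp
    ultimately show ?thesis by blast
  next
    case False
    have "c \<in># add_mset q (\<Sum>\<^sub># Q)" unfolding eq[symmetric] by simp
    then have "c \<in># \<Sum>\<^sub># Q" using False by simp
    then obtain e where e: "e \<in># Q" "c \<in># e" by auto
    then obtain c0 d0 where cd0: "e = {#c0,d0#}" "E c0 d0" using less.prems(3) by blast
    obtain d where d: "e = {#c,d#}" "E c d"
    proof (cases "c = c0")
      case True
      then show ?thesis using that cd0 by blast
    next
      case False
      then have "c = d0" using e(2) cd0(1) by auto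
      moreover have "E d0 c0" using cd0(2) less.prems(5) by blast
      ultimately show ?thesis using that[of c0] cd0(1) by (simp add: add_mset_commute)
    qed
    define Q' where "Q' = Q - {#e#}"
    have Qe: "Q = add_mset e Q'" using e(1) by (simp add: Q'_def)
    have "add_mset c (edge_prod fs') = add_mset c ({#d,q#} + \<Sum>\<^sub># Q')"
      using eq unfolding Qe d(1) by (simp add: add_mset_commute)
    then have ep': "edge_prod fs' = {#d,q#} + \<Sum>\<^sub># Q'" by simp
    have "size Q' < size Q" "length fs' = Suc (size Q')" using Qe lfs' by simp_all
    moreover have "\<forall>e\<in>#Q'. \<exists>c d. e = {#c,d#} \<and> E c d" using less.prems(3) Qe by simp
    ultimately obtain U' where U': "U' \<subseteq># Q'" "wk E U' d q"
      using less.hyps[OF _ _ efs' _ ep' less.prems(5)] by blast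
    have "wk E (add_mset {#c,d#} U') p q" by (rule wk.wk_step[of E, OF c(1) d(2) U'(2)])
    moreover have "add_mset {#c,d#} U' \<subseteq># Q" using U'(1) Qe d(1) by simp
    ultimately show ?thesis by blast
  qed
qed

lemma key:
  assumes graph: "simple_graph V E" and V_def: "V = x ` {1..h} \<union> y ` {1..h}"
    and distinct: "card V = 2 * h"
    and vwc: "very_well_covered V E" and matching: "\<forall>j\<in>{1..h}. E (x j) (y j)"
    and k: "k \<in> {1..h}" and px: "E p (x k)" and qy: "E q (y k)"
  shows "E p q \<or> p = y k \<or> q = x k"
proof (rule ccontr)
  assume H: "\<not> (E p q \<or> p = y k \<or> q = x k)"
  have fin: "finite V" using graph unfolding simple_graph_def by auto
  have Ed: "\<And>a b. E a b \<Longrightarrow> a \<in> V \<and> b \<in> V \<and> a \<noteq> b \<and> E b a"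
    using graph unfolding simple_graph_def by blast
  have pV: "p \<in> V" "q \<in> V" using Ed px qy by auto
  define P where "P T \<longleftrightarrow> independent_set V E T \<and> {p,q} \<subseteq> T" for T
  have P0: "P {p,q}" unfolding P_def independent_set_def using pV H Ed by blast
  have bound: "\<forall>T. P T \<longrightarrow> card T < Suc (card V)"
    unfolding P_def independent_set_def using card_mono[OF fin] by (simp add: le_imp_less_Suc)
  obtain M where M: "P M" "\<forall>T. P T \<longrightarrow> card T \<le> card M"
    using ex_has_greatest_nat[OF P0 bound] by blast
  have MV: "M \<subseteq> V" and Mind: "\<forall>a\<in>M. \<forall>b\<in>M. \<not> E a b" and pqM: "p \<in> M" "q \<in> M"
    using M(1) unfolding P_def independent_set_def by auto
  have finM: "finite M" using finite_subset[OF MV fin] .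
  have vc: "vertex_cover V E (V - M)" unfolding vertex_cover_def using Mind by blast
  have mn: "\<forall>D. D \<subset> V - M \<longrightarrow> \<not> vertex_cover V E D"
  proof (intro allI impI notI)
    fix D assume D: "D \<subset> V - M" and Dc: "vertex_cover V E D"
    obtain v where v: "v \<in> V - M" "v \<notin> D" using D by blast
    have "\<not> E a b" if ab: "a \<in> insert v M" "b \<in> insert v M" for a b
    proof
      assume Eab: "E a b"
      have "a \<in> D \<or> b \<in> D" using Dc Eab Ed unfolding vertex_cover_def by blast
      moreover have "a \<noteq> b" using Ed Eab by blast
      ultimately show False using ab v D Mind Eab by blast
    qed
    then have "P (insert v M)" unfolding P_def independent_set_def using v MV pqM by blast
    then have "card (insert v M) \<le> card M" using M(2) by blast
    moreover have "card (insert v M) = Suc (card M)" using v finM by simp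
    ultimately show False by simp
  qed
  have "minimal_vertex_cover V E (V - M)" unfolding minimal_vertex_cover_def using vc mn by blast
  then have "2 * card (V - M) = card V" using vwc unfolding very_well_covered_def by blast
  moreover have "card (V - M) = card V - card M" using card_Diff_subset[OF finM MV] .
  moreover have "card M \<le> card V" using card_mono[OF fin MV] .
  ultimately have cM: "card M = h" using distinct by linarith
  have xk: "x k \<notin> M" using px pqM Mind by blast
  have yk: "y k \<notin> M" using qy pqM Mind by blast
  define idx where "idx m = (SOME j. j \<in> {1..h} \<and> (m = x j \<or> m = y j))" for m
  have idx: "idx m \<in> {1..h} \<and> (m = x (idx m) \<or> m = y (idx m))" if "m \<in> M" for m
  proof -
    have "\<exists>j. j \<in> {1..h} \<and> (m = x j \<or> m = y j)" using that MV V_def by blast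
    then show ?thesis unfolding idx_def by (rule someI_ex)
  qed
  have inj: "inj_on idx M"
  proof (rule inj_onI)
    fix m m' assume mm: "m \<in> M" "m' \<in> M" "idx m = idx m'"
    show "m = m'"
    proof (rule ccontr)
      assume "m \<noteq> m'"
      then have "E m m' \<or> E m' m" using idx[OF mm(1)] idx[OF mm(2)] mm(3) matching by metis
      then show False using Mind mm by blast
    qed
  qed
  have img: "idx ` M \<subseteq> {1..h} - {k}"
  proof (rule image_subsetI)
    fix m assume mM: "m \<in> M"
    then show "idx m \<in> {1..h} - {k}" using idx[OF mM] xk yk by auto
  qed
  have "card M \<le> card ({1..h} - {k})" using card_inj_on_le[OF inj img] by simp
  then have "card M \<le> h - 1" using k by simp
  then show False using cM k by simp
qed

lemma size_edge_prod: "size (edge_prod l) = 2 * length l"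
  unfolding edge_prod_def by (induction l) auto

lemma sub_size_eq: "(A::'b multiset) \<subseteq># B \<Longrightarrow> size A = size B \<Longrightarrow> A = B"
  by (metis add_diff_cancel_left' size_Diff_submset size_eq_0_iff_empty subset_mset.add_diff_inverse add_0_right)

theorem lemma4p4:
  fixes V :: "'a set" and E :: "'a \<Rightarrow> 'a \<Rightarrow> bool"
    and x y :: "nat \<Rightarrow> 'a" and h :: nat
    and es :: "('a \<times> 'a) list"
    and i :: nat and u w a b :: 'a
  assumes graph: "simple_graph V E"
    and V_def: "V = x ` {1..h} \<union> y ` {1..h}"
    and distinct: "card V = 2 * h"
    and vwc: "very_well_covered V E"
    and xcover: "minimal_vertex_cover V E (x ` {1..h})"
    and yindep: "maximal_independent_set V E (y ` {1..h})"
    and matching: "\<forall>j\<in>{1..h}. E (x j) (y j)"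
    and s_pos: "length es \<ge> 1"
    and es_edges: "\<forall>(p,q)\<in>set es. E p q"
    and i_range: "i \<in> {1..h}"
    and u_w: "(u = x i \<and> w = y i) \<or> (u = y i \<and> w = x i)"
    and u_sq: "in_power_colon E es {#u, u#}"
    and a_nbr: "a \<in> V \<and> a \<noteq> w \<and> in_power_colon E es {#w, a#}"
    and b_nbr: "b \<in> {x i, y i} \<union> {v. E (x i) v \<or> E (y i) v}"
  shows "in_power_colon E es {#a, b#}"
proof -
  have symm: "\<forall>a b. E a b \<longrightarrow> E b a" using graph unfolding simple_graph_def by blast
  have symm': "\<And>a b. E a b \<Longrightarrow> E b a" using symm by blast
  have irr: "\<And>a. \<not> E a a" using graph unfolding simple_graph_def by blast
  have KEY: "E p q \<or> p = w \<or> q = u" if "E u p" "E w q" for p q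
    using u_w
  proof
    assume uw: "u = x i \<and> w = y i"
    have "E p (x i)" "E q (y i)" using that uw symm' by auto
    then show ?thesis using key[OF graph V_def distinct vwc matching i_range] uw by blast
  next
    assume uw: "u = y i \<and> w = x i"
    have "E q (x i)" "E p (y i)" using that uw symm' by auto
    then have "E q p \<or> q = y i \<or> p = x i" using key[OF graph V_def distinct vwc matching i_range] by blast
    then show ?thesis using uw symm' by blast
  qed
  have esE: "\<forall>e\<in>#eb es. \<exists>c d. e = {#c,d#} \<and> E c d" unfolding eb_def using es_edges by fastforce
  have toW: "\<exists>U. U \<subseteq># eb es \<and> wk E U p q" if J: "in_power_colon E es {#p,q#}" for p q
  proof -
    obtain fs where fs: "length fs = Suc (length es)" "\<forall>(p,q)\<in>set fs. E p q"
      "edge_prod fs \<subseteq># {#p,q#} + edge_prod es" using J unfolding in_power_colon_def by blast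
    have "size (edge_prod fs) = size ({#p,q#} + edge_prod es)"
      using fs(1) by (simp add: size_edge_prod)
    then have "edge_prod fs = {#p,q#} + \<Sum>\<^sub># (eb es)"
      using sub_size_eq[OF fs(3)] by (simp add: edge_prod_eq[of es])
    moreover have "length fs = Suc (size (eb es))" using fs(1) by (simp add: eb_def)
    ultimately show ?thesis using compl[OF _ fs(2) esE _ symm] by blast
  qed
  obtain U where U: "U \<subseteq># eb es" "wk E U u u" using toW[OF u_sq] by blast
  obtain R where R: "R \<subseteq># eb es" "wk E R w a" using toW[of w a] a_nbr by blast
  have Ra: "wk E R a w" using wk_rev[OF R(2) symm'] .
  have CL: "\<forall>e\<in>#U. \<forall>c\<in>#e. \<exists>U'. U' \<subseteq># U \<and> hw E U' c u"
    using wk_closed[of E U u u, OF U(2) symm'] by metis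
  have HB: "\<forall>t. E t w \<longrightarrow> wk E U t u"
    using U(2)
  proof (cases rule: wk.cases)
    case (wk_base)
    then show ?thesis using irr by blast
  next
    case (wk_step p1 d U1)
    show ?thesis
    proof (intro allI impI)
      fix t assume tw: "E t w"
      have "E p1 t \<or> p1 = w \<or> t = u" using KEY[OF wk_step(2) symm'[OF tw]] .
      then show "wk E U t u"
      proof (elim disjE)
        assume "t = u" then show ?thesis using U(2) by simp
      next
        assume "E p1 t" then have "E t p1" using symm' by blast
        then show ?thesis unfolding wk_step(1) by (rule wk.wk_step[of E, OF _ wk_step(3,4)])
      next
        assume "p1 = w" then have "E t p1" using tw by simp
        then show ?thesis unfolding wk_step(1) by (rule wk.wk_step[of E, OF _ wk_step(3,4)])
      qed
    qed
  qed
  have s1: "{#} + R \<subseteq># eb es" using R(1) by simp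
  have s2: "\<forall>e. e \<in># {#} \<longrightarrow> e \<notin># U" by simp
  obtain X where X: "X \<subseteq># eb es" "wk E X a u"
    using shortcut[OF Ra pre_nil[of E a] s1 s2 U(1) CL HB] by blast
  have bc: "b = u \<or> b = w \<or> E u b \<or> E w b" using b_nbr u_w by auto
  have "\<exists>Y. Y \<subseteq># eb es \<and> wk E Y a b"
  proof -
    { assume "b = u" then have ?thesis using X by blast }
    moreover
    { assume "b = w" then have ?thesis using R(1) Ra by blast }
    moreover
    { assume ub: "E u b"
      obtain z where z: "E z w" "\<forall>b. E z b \<longrightarrow> wk E R a b" using wk_last[OF Ra] by blast
      have "E w z" using z(1) symm' by blast
      then have "E b z \<or> b = w \<or> z = u" using KEY[OF ub] by blast
      then have "wk E R a b" using z(2) symm' ub Ra by blast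
      then have ?thesis using R(1) by blast }
    moreover
    { assume wb: "E w b"
      obtain z where z: "E z u" "\<forall>b. E z b \<longrightarrow> wk E X a b" using wk_last[OF X(2)] by blast
      have "E u z" using z(1) symm' by blast
      then have "E z b \<or> z = w \<or> b = u" using KEY[OF _ wb] by blast
      then have "wk E X a b" using z(2) wb X(2) by blast
      then have ?thesis using X(1) by blast }
    ultimately show ?thesis using bc by blast
  qed
  then obtain Y where "Y \<subseteq># eb es" "wk E Y a b" by blast
  then show ?thesis using sound[of E Y a b es] es_edges by blast
qed

end
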